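(* Let $\boldsymbol{Y}_t$ be an $n\times 1$ vector of observed variables generated by the structural vector moving average model $$\boldsymbol{Y}_t=\sum_{j=0}^{\infty}\boldsymbol{\Theta}_j\boldsymbol{\varepsilon}_{t-j},$$ where $\boldsymbol{\varepsilon}_t=(\varepsilon_{1,t},\dots,\varepsilon_{m,t})'$ is an $m\times1$ vector of unobserved structural shocks with $E[\boldsymbol{\varepsilon}_t]=0$, $E[\boldsymbol{\varepsilon}_t\boldsymbol{\varepsilon}_t']>0$ and mutually uncorrelated components, and each $\boldsymbol{\Theta}_h$ is an $n\times m$ matrix. Let $x_t$ be the first element and $y_t$ the last element of $\boldsymbol{Y}_t$, let $\theta_{h,xs}$ and $\theta_{h,ys}$ denote the $(1,s)$-th and $(n,s)$-th elements of $\boldsymbol{\Theta}_h$. Fix $1\le S\le m$ and let $\xi_t=\sum_{s=1}^S\varepsilon_{s,t}$. Let $z_t$ be a random variable satisfying: (i) $E[z_t\xi_t]\neq0$; (ii) $E[z_t\varepsilon_{s,t}]=0$ for all $s=S+1,\dots,m$; (iii) $E[z_t\boldsymbol{\varepsilon}_{t+j}]=0$ for all $j\ne0$. Write $\alpha_s=E[z_t\varepsilon_{s,t}]$. For $h\ge0$ define $\widetilde{y}_{t+h}=\sum_{j=0}^h y_{t+j}$, $\widetilde{x}_{t+h}=\sum_{j=0}^h x_{t+j}$, $\widetilde{\theta}_{h,ys}=\sum_{j=0}^h\theta_{j,ys}$ and $\widetilde{\theta}_{h,xs}=\sum_{j=0}^h\theta_{j,xs}$. Suppose $\widetilde{\theta}_{h,xs}\neq0$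 for all $s=1,\dots,S$. Then for every $h=0,1,2,\dots$ such that $Cov(\widetilde{x}_{t+h},z_t)\neq 0$, $$\widetilde{\beta}_h\equiv\frac{Cov(\widetilde{y}_{t+h},z_t)}{Cov(\widetilde{x}_{t+h},z_t)}=\sum_{s=1}^S\left(\frac{\alpha_s\widetilde{\theta}_{h,xs}}{\sum_{s'=1}^S\alpha_{s'}\widetilde{\theta}_{h,xs'}}\right)\frac{\widetilde{\theta}_{h,ys}}{\widetilde{\theta}_{h,xs}}.$$
   Context: All moments involved are assumed finite and the moving average series is assumed to converge so that covariances can be computed term by term. *)

theory Defs
  imports "HOL-Probability.Probability"
begin

definition cov :: "'a measure \<Rightarrow> ('a \<Rightarrow> real) \<Rightarrow> ('a \<Rightarrow> real) \<Rightarrow> real" where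
  "cov M X Z = (\<integral>\<omega>. (X \<omega> - (\<integral>\<omega>'. X \<omega>' \<partial>M)) * (Z \<omega> - (\<integral>\<omega>'. Z \<omega>' \<partial>M)) \<partial>M)"

end

theory Submission
  imports Defs
begin

lemma L2_prod_integrable:
  fixes f g :: "'a \<Rightarrow> real"
  assumes P: "prob_space M" and fm: "f \<in> borel_measurable M" and gm: "g \<in> borel_measurable M"
    and f2: "integrable M (\<lambda>x. (f x)\<^sup>2)" and g2: "integrable M (\<lambda>x. (g x)\<^sup>2)"
  shows "integrable M (\<lambda>x. f x * g x)"
proof (rule Bochner_Integration.integrable_bound[where f="\<lambda>x. (f x)\<^sup>2 + (g x)\<^sup>2"])
  show "integrable M (\<lambda>x. (f x)\<^sup>2 + (g x)\<^sup>2)" using f2 g2 by simp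
  show "(\<lambda>x. f x * g x) \<in> borel_measurable M" using fm gm by simp
  show "AE x in M. norm (f x * g x) \<le> norm ((f x)\<^sup>2 + (g x)\<^sup>2)"
  proof (rule AE_I2)
    fix x
    have "\<bar>f x * g x\<bar> \<le> (f x)\<^sup>2 + (g x)\<^sup>2"
    proof -
      have h: "0 \<le> (\<bar>f x\<bar> - \<bar>g x\<bar>)\<^sup>2" by simp
      have "(\<bar>f x\<bar> - \<bar>g x\<bar>)\<^sup>2 = (f x)\<^sup>2 + (g x)\<^sup>2 - 2 * \<bar>f x * g x\<bar>"
        by (simp add: power2_diff abs_mult)
      with h show ?thesis by linarith
    qed
    then show "norm (f x * g x) \<le> norm ((f x)\<^sup>2 + (g x)\<^sup>2)" by simp
  qed
qed

lemma L2_integrable: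
  fixes f :: "'a \<Rightarrow> real"
  assumes P: "prob_space M" and fm: "f \<in> borel_measurable M"
    and f2: "integrable M (\<lambda>x. (f x)\<^sup>2)"
  shows "integrable M f"
proof -
  interpret prob_space M by (rule P)
  show ?thesis by (rule square_integrable_imp_integrable[OF fm f2])
qed

lemma cov_eq:
  fixes X z :: "'a \<Rightarrow> real"
  assumes P: "prob_space M" and Xi: "integrable M X" and zi: "integrable M z"
    and Xz: "integrable M (\<lambda>x. X x * z x)"
  shows "cov M X z = (\<integral>x. X x * z x \<partial>M) - (\<integral>x. X x \<partial>M) * (\<integral>x. z x \<partial>M)"
proof -
  interpret prob_space M by (rule P)
  let ?a = "\<integral>x. X x \<partial>M" and ?b = "\<integral>x. z x \<partial>M"
  have e: "\<And>x. (X x - ?a) * (z x - ?b) = X x * z x - ?b * X x - ?a * z x + ?a * ?b"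
    by (simp add: algebra_simps)
  have "cov M X z = (\<integral>x. X x * z x - ?b * X x - ?a * z x + ?a * ?b \<partial>M)"
    unfolding cov_def e ..
  also have "\<dots> = (\<integral>x. X x * z x \<partial>M) - ?b * ?a - ?a * ?b + ?a * ?b"
    using Xi zi Xz by (simp add: prob_space)
  finally show ?thesis by simp
qed

lemma cov_sum:
  fixes X :: "nat \<Rightarrow> 'a \<Rightarrow> real" and z :: "'a \<Rightarrow> real"
  assumes P: "prob_space M" and Xi: "\<And>j. j \<in> A \<Longrightarrow> integrable M (X j)" and zi: "integrable M z"
    and Xz: "\<And>j. j \<in> A \<Longrightarrow> integrable M (\<lambda>x. X j x * z x)"
  shows "cov M (\<lambda>x. \<Sum>j\<in>A. X j x) z = (\<Sum>j\<in>A. cov M (X j) z)"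
proof -
  have "cov M (\<lambda>x. \<Sum>j\<in>A. X j x) z
     = (\<integral>x. (\<Sum>j\<in>A. X j x * z x) \<partial>M) - (\<integral>x. (\<Sum>j\<in>A. X j x) \<partial>M) * (\<integral>x. z x \<partial>M)"
    using cov_eq[OF P _ zi, of "\<lambda>x. \<Sum>j\<in>A. X j x"] Xi Xz
    by (simp add: sum_distrib_right)
  also have "\<dots> = (\<Sum>j\<in>A. (\<integral>x. X j x * z x \<partial>M)) - (\<Sum>j\<in>A. (\<integral>x. X j x \<partial>M)) * (\<integral>x. z x \<partial>M)"
    using Xi Xz by (simp add: integral_sum)
  also have "\<dots> = (\<Sum>j\<in>A. cov M (X j) z)"
    using cov_eq[OF P Xi zi Xz] by (simp add: sum_distrib_right sum_subtractf)
  finally show ?thesis .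
qed

theorem corollary1:
  fixes M :: "'a measure"
    and eps :: "int \<Rightarrow> nat \<Rightarrow> 'a \<Rightarrow> real"   \<comment> \<open>eps t s = s-th structural shock at time t, s = 1..m\<close>
    and Theta :: "nat \<Rightarrow> nat \<Rightarrow> nat \<Rightarrow> real"  \<comment> \<open>Theta h i s = (i,s) entry of Theta_h\<close>
    and Y :: "int \<Rightarrow> nat \<Rightarrow> 'a \<Rightarrow> real"     \<comment> \<open>Y t i = i-th component of Y_t, i = 1..n\<close>
    and z :: "'a \<Rightarrow> real"
    and n m S :: nat and t :: int and h :: nat
  assumes P: "prob_space M"
    and n: "n \<ge> 1"
    and S: "1 \<le> S" "S \<le> m"
    and eps_meas: "\<And>t s. eps t s \<in> borel_measurable M"
    and eps_L2: "\<And>t s. integrable M (\<lambda>\<omega>. (eps t s \<omega>)\<^sup>2)"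
    and eps_mean: "\<And>t s. s \<in> {1..m} \<Longrightarrow> (\<integral>\<omega>. eps t s \<omega> \<partial>M) = 0"
    and eps_var_pos: "\<And>t s. s \<in> {1..m} \<Longrightarrow> (\<integral>\<omega>. (eps t s \<omega>)\<^sup>2 \<partial>M) > 0"
    and eps_uncorr: "\<And>t s s'. s \<in> {1..m} \<Longrightarrow> s' \<in> {1..m} \<Longrightarrow> s \<noteq> s' \<Longrightarrow>
                       (\<integral>\<omega>. eps t s \<omega> * eps t s' \<omega> \<partial>M) = 0"
    and Y_summable: "\<And>t i \<omega>. i \<in> {1..n} \<Longrightarrow>
                       summable (\<lambda>j. \<Sum>s=1..m. Theta j i s * eps (t - int j) s \<omega>)"
    and Y_def: "\<And>t i \<omega>. i \<in> {1..n} \<Longrightarrow>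
                       Y t i \<omega> = (\<Sum>j. \<Sum>s=1..m. Theta j i s * eps (t - int j) s \<omega>)"
    and Y_L2: "\<And>t i. i \<in> {1..n} \<Longrightarrow> integrable M (\<lambda>\<omega>. (Y t i \<omega>)\<^sup>2)"
    and Y_meas: "\<And>t i. i \<in> {1..n} \<Longrightarrow> Y t i \<in> borel_measurable M"
    and z_meas: "z \<in> borel_measurable M"
    and z_L2: "integrable M (\<lambda>\<omega>. (z \<omega>)\<^sup>2)"
    and termwise: "\<And>t' i. i \<in> {1..n} \<Longrightarrow>
       (\<lambda>j. \<Sum>s=1..m. Theta j i s * cov M (eps (t' - int j) s) z) sums cov M (Y t' i) z"
    and inst_relevance: "(\<integral>\<omega>. z \<omega> * (\<Sum>s=1..S. eps t s \<omega>) \<partial>M) \<noteq> 0"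
    and inst_exog: "\<And>s. s \<in> {S+1..m} \<Longrightarrow> (\<integral>\<omega>. z \<omega> * eps t s \<omega> \<partial>M) = 0"
    and inst_lead_lag: "\<And>j s. j \<noteq> 0 \<Longrightarrow> s \<in> {1..m} \<Longrightarrow> (\<integral>\<omega>. z \<omega> * eps (t + j) s \<omega> \<partial>M) = 0"
    and theta_x_nz: "\<And>s. s \<in> {1..S} \<Longrightarrow> (\<Sum>j=0..h. Theta j 1 s) \<noteq> 0"
    and cov_x_nz: "cov M (\<lambda>\<omega>. \<Sum>j=0..h. Y (t + int j) 1 \<omega>) z \<noteq> 0"
  shows
    "cov M (\<lambda>\<omega>. \<Sum>j=0..h. Y (t + int j) n \<omega>) z / cov M (\<lambda>\<omega>. \<Sum>j=0..h. Y (t + int j) 1 \<omega>) z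
     = (\<Sum>s=1..S.
          ((\<integral>\<omega>. z \<omega> * eps t s \<omega> \<partial>M) * (\<Sum>j=0..h. Theta j 1 s)
            / (\<Sum>s'=1..S. (\<integral>\<omega>. z \<omega> * eps t s' \<omega> \<partial>M) * (\<Sum>j=0..h. Theta j 1 s')))
          * ((\<Sum>j=0..h. Theta j n s) / (\<Sum>j=0..h. Theta j 1 s)))"
proof -
  interpret prob_space M by (rule P)
  define \<alpha> where "\<alpha> s = (\<integral>\<omega>. z \<omega> * eps t s \<omega> \<partial>M)" for s
  define tx where "tx i s = (\<Sum>j=0..h. Theta j i s)" for i s
  have zi: "integrable M z" using L2_integrable[OF P z_meas z_L2] .
  have epsi: "integrable M (eps u s)" for u s using L2_integrable[OF P eps_meas eps_L2] .
  have Yi: "i \<in> {1..n} \<Longrightarrow> integrable M (Y u i)" for u i using L2_integrable[OF P Y_meas Y_L2] .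
  have Yz: "i \<in> {1..n} \<Longrightarrow> integrable M (\<lambda>x. Y u i x * z x)" for u i
    using L2_prod_integrable[OF P Y_meas z_meas Y_L2 z_L2] .
  have cov_eps: "cov M (eps u s) z = (\<integral>\<omega>. z \<omega> * eps u s \<omega> \<partial>M)" if "s \<in> {1..m}" for u s
    using cov_eq[OF P epsi zi L2_prod_integrable[OF P eps_meas z_meas eps_L2 z_L2]] eps_mean[OF that]
    by (simp add: mult.commute)
  have \<alpha>0: "\<alpha> s = 0" if "s \<in> {S+1..m}" for s using inst_exog[OF that] by (simp add: \<alpha>_def)
  have covY: "cov M (Y (t + int j) i) z = (\<Sum>s=1..S. Theta j i s * \<alpha> s)" if i: "i \<in> {1..n}" for i j
  proof -
    define c where "c = (\<Sum>s=1..m. Theta j i s * \<alpha> s)"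
    have termk: "(\<Sum>s=1..m. Theta k i s * cov M (eps (t + int j - int k) s) z) = (if k = j then c else 0)" for k
    proof (cases "k = j")
      case True
      then show ?thesis using cov_eps by (simp add: c_def \<alpha>_def)
    next
      case False
      have "t + int j - int k = t + (int j - int k)" by simp
      moreover have "int j - int k \<noteq> 0" using False by simp
      ultimately have "cov M (eps (t + int j - int k) s) z = 0" if "s \<in> {1..m}" for s
        using cov_eps[OF that] inst_lead_lag[OF _ that] by metis
      then show ?thesis using False by simp
    qed
    have "(\<lambda>k. if k = j then c else 0) sums cov M (Y (t + int j) i) z"
      using termwise[OF i, of "t + int j"] by (simp only: termk)
    moreover have "(\<lambda>k. if k = j then c else 0) sums c" using sums_single[of j "\<lambda>_. c"] by simp
    ultimately have "cov M (Y (t + int j) i) z = c" using sums_unique2 by blast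
    also have "c = (\<Sum>s=1..S. Theta j i s * \<alpha> s) + (\<Sum>s=S+1..m. Theta j i s * \<alpha> s)"
    proof -
      have "{1..m} = {1..S} \<union> {S+1..m}" using S by auto
      then show ?thesis unfolding c_def by (simp add: sum.union_disjoint)
    qed
    also have "(\<Sum>s=S+1..m. Theta j i s * \<alpha> s) = 0" using \<alpha>0 by simp
    finally show ?thesis by simp
  qed
  have covsum: "cov M (\<lambda>\<omega>. \<Sum>j=0..h. Y (t + int j) i \<omega>) z = (\<Sum>s=1..S. \<alpha> s * tx i s)"
    if i: "i \<in> {1..n}" for i
  proof -
    have "cov M (\<lambda>\<omega>. \<Sum>j=0..h. Y (t + int j) i \<omega>) z = (\<Sum>j=0..h. cov M (Y (t + int j) i) z)"
      by (rule cov_sum[OF P _ zi]) (use Yi Yz i in auto)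
    also have "\<dots> = (\<Sum>j=0..h. \<Sum>s=1..S. Theta j i s * \<alpha> s)" using covY[OF i] by simp
    also have "\<dots> = (\<Sum>s=1..S. \<alpha> s * tx i s)"
      unfolding tx_def by (subst sum.swap) (simp add: sum_distrib_left mult.commute)
    finally show ?thesis .
  qed
  have i1: "1 \<in> {1..n}" and iN: "n \<in> {1..n}" using n by auto
  define D where "D = (\<Sum>s=1..S. \<alpha> s * tx 1 s)"
  have D: "D \<noteq> 0" using cov_x_nz covsum[OF i1] by (simp add: D_def)
  have "(\<Sum>s=1..S. (\<alpha> s * tx 1 s / D) * (tx n s / tx 1 s)) = (\<Sum>s=1..S. \<alpha> s * tx n s / D)"
    by (rule sum.cong) (use theta_x_nz in \<open>auto simp: tx_def\<close>)
  also have "\<dots> = (\<Sum>s=1..S. \<alpha> s * tx n s) / D" by (simp add: sum_divide_distrib)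
  finally have R: "(\<Sum>s=1..S. (\<alpha> s * tx 1 s / D) * (tx n s / tx 1 s)) = (\<Sum>s=1..S. \<alpha> s * tx n s) / D" .
  have "cov M (\<lambda>\<omega>. \<Sum>j=0..h. Y (t + int j) n \<omega>) z / cov M (\<lambda>\<omega>. \<Sum>j=0..h. Y (t + int j) 1 \<omega>) z
      = (\<Sum>s=1..S. \<alpha> s * tx n s) / D"
    using covsum[OF i1] covsum[OF iN] by (simp only: D_def)
  also have "\<dots> = (\<Sum>s=1..S. (\<alpha> s * tx 1 s / D) * (tx n s / tx 1 s))" using R by simp
  finally show ?thesis unfolding D_def \<alpha>_def tx_def .
qed

end
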